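(* Let $n$ be one of the integers for which $\mathbb{Z}[\xi_n]$ has class number one, $\mathcal{M}_n=\mathbb{Z}[\xi_n]$, and $I$ a principal ideal of $\mathcal{M}_n$ of finite index, with $\Lambda\subset\mathbb{R}^{\varphi(n)}$ the lattice representing $\mathcal{M}_n$ and $L$ the sublattice representing $I$. For the Bravais coloring of $\mathcal{M}_n$ determined by $I$, the color symmetry group satisfies $H=T(G)\rtimes D_N$ if and only if $\phi_2(L)=L$.
   Context: Standing assumption: $n\in\{3,4,5,7,8,9,11,12,13,15,16,17,19,20,21,24,25,27,28,32,33,35,36,40,44,45,48,60,84\}$ (the values for which $\mathcal{M}_n=\mathbb{Z}[\xi_n]$, $\xi_n=\exp(2\pi i/n)$, is a principal ideal domain). Let $\varphi$ be Euler's function and $N=n$ if $n$ is even, $N=2n$ if $n$ is odd. Using the $\mathbb{Z}$-basis $\{1,\xi_n,\dots,\xi_n^{\varphi(n)-1}\}$ of $\mathcal{M}_n$, each element is identified with its integer coordinate vector, so $\mathcal{M}_n$ becomes a lattice $\Lambda=\mathbb{Z}^{\varphi(n)}\subset\mathbb{R}^{\varphi(n)}$, and a principal ideal $I$ of index $\ell$ becomes a sublattice $L\subseteq\Lambda$ of index $\ell$. Let $\phi_1$ be the linear map of $\mathbb{R}^{\varphi(n)}$ induced by multiplication by $\exp(2\pi i/N)$ (an $N$-fold rotation) and $\phi_2$ the linear map induced by complex conjugation (a reflection); they generate a group $D_N$, dihedral of order $2N$. Let $T(G)=\{t_y: x\mapsto x+y \mid y\in\Lambda\}$. The symmetry group of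 $\Lambda$ is $G=T(G)\rtimes D_N$. The Bravais coloring determined by $I$ assigns to each element of $\Lambda$ one of $\ell$ colors, two elements getting the same color iff they lie in the same coset of $L$ in $\Lambda$. The color symmetry group $H$ is the set of $g\in G$ that permute the colors, i.e. for every coset $x+L$ the image $g(x+L)$ is again a coset of $L$. *)

theory Defs
  imports "HOL-Computational_Algebra.Polynomial" Complex_Main
begin

definition pid_cyclotomic_indices :: "nat set" where
  "pid_cyclotomic_indices = {3,4,5,7,8,9,11,12,13,15,16,17,19,20,21,24,25,27,28,32,33,35,36,40,44,45,48,60,84}"

definition xi :: "nat \<Rightarrow> complex" where
  "xi n = exp (2 * of_real pi * \<i> / of_nat n)"

definition bigN :: "nat \<Rightarrow> nat" where
  "bigN n = (if even n then n else 2 * n)"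

text \<open>M_n = Z[xi_n], realised inside the complex numbers; the lattice Lambda is its
  image under the coordinate isomorphism with respect to the basis 1, xi, ..., xi^(phi(n)-1).\<close>
definition Mn :: "nat \<Rightarrow> complex set" where
  "Mn n = {poly (map_poly of_int p) (xi n) | p :: int poly. True}"

definition phi1 :: "nat \<Rightarrow> complex \<Rightarrow> complex" where
  "phi1 n z = exp (2 * of_real pi * \<i> / of_nat (bigN n)) * z"

definition phi2 :: "complex \<Rightarrow> complex" where
  "phi2 = cnj"

definition DN :: "nat \<Rightarrow> (complex \<Rightarrow> complex) set" where
  "DN n = {(phi1 n ^^ k) \<circ> (phi2 ^^ e) | k e. k < bigN n \<and> e < 2}"

definition TG :: "nat \<Rightarrow> (complex \<Rightarrow> complex) set" where
  "TG n = {(\<lambda>x. x + y) | y. y \<in> Mn n}"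

definition semidirect_TD :: "nat \<Rightarrow> (complex \<Rightarrow> complex) set" where
  "semidirect_TD n = {t \<circ> h | t h. t \<in> TG n \<and> h \<in> DN n}"

definition Gsym :: "nat \<Rightarrow> (complex \<Rightarrow> complex) set" where
  "Gsym n = semidirect_TD n"

text \<open>Cosets of a sublattice L in the lattice M_n (the colors).\<close>
definition cosets_in :: "nat \<Rightarrow> complex set \<Rightarrow> complex set set" where
  "cosets_in n L = {(\<lambda>z. x + z) ` L | x. x \<in> Mn n}"

definition color_symmetry_group :: "nat \<Rightarrow> complex set \<Rightarrow> (complex \<Rightarrow> complex) set" where
  "color_symmetry_group n L =
     {g \<in> Gsym n. \<forall>C \<in> cosets_in n L. g ` C \<in> cosets_in n L}"

definition principal_ideal :: "nat \<Rightarrow> complex set \<Rightarrow> bool" where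
  "principal_ideal n I \<longleftrightarrow> (\<exists>a \<in> Mn n. I = {a * x | x. x \<in> Mn n})"

definition finite_index :: "nat \<Rightarrow> complex set \<Rightarrow> bool" where
  "finite_index n I \<longleftrightarrow> finite (cosets_in n I)"

end

theory Submission imports Defs "HOL-Analysis.Complex_Transcendental" begin

abbreviation mp :: "int poly \<Rightarrow> complex poly" where "mp p \<equiv> map_poly of_int p"

lemma mp_add: "mp (p + q) = mp p + mp q"
  by (simp add: poly_eq_iff coeff_map_poly)
lemma mp_uminus: "mp (- p) = - mp p"
  by (simp add: poly_eq_iff coeff_map_poly)
lemma mp_mult: "mp (p * q) = mp p * mp q"
  by (simp add: poly_eq_iff coeff_map_poly coeff_mult)

lemma M_add: "x \<in> Mn n \<Longrightarrow> y \<in> Mn n \<Longrightarrow> x + y \<in> Mn n"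
  unfolding Mn_def by (auto, metis mp_add poly_add)
lemma M_uminus: "x \<in> Mn n \<Longrightarrow> - x \<in> Mn n"
  unfolding Mn_def by (auto, metis mp_uminus poly_minus)
lemma M_mult: "x \<in> Mn n \<Longrightarrow> y \<in> Mn n \<Longrightarrow> x * y \<in> Mn n"
  unfolding Mn_def by (auto, metis mp_mult poly_mult)
lemma M_of_int: "of_int k \<in> Mn n"
  unfolding Mn_def by (rule CollectI, rule exI[of _ "[:k:]"]) (simp add: map_poly_pCons)
lemma M_0: "0 \<in> Mn n" using M_of_int[of 0] by simp
lemma M_1: "1 \<in> Mn n" using M_of_int[of 1] by simp
lemma M_xi: "xi n \<in> Mn n"
  unfolding Mn_def by (rule CollectI, rule exI[of _ "[:0,1:]"]) (simp add: map_poly_pCons)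
lemma M_pow: "x \<in> Mn n \<Longrightarrow> x ^ k \<in> Mn n"
  by (induct k) (auto intro: M_mult M_1)
lemma M_poly: "w \<in> Mn n \<Longrightarrow> poly (mp p) w \<in> Mn n"
  by (induct p) (auto simp: map_poly_pCons intro!: M_add M_mult M_of_int M_0)

lemma xi_pow_n: "n > 0 \<Longrightarrow> xi n ^ n = 1"
proof -
  assume "n > 0"
  have "xi n ^ n = exp (of_nat n * (2 * of_real pi * \<i> / of_nat n))"
    unfolding xi_def by (rule exp_of_nat_mult[symmetric])
  also have "\<dots> = exp (2 * of_real pi * \<i>)" using \<open>n>0\<close> by simp
  also have "\<dots> = 1" by simp
  finally show ?thesis .
qed

lemma cnj_xi: "n > 0 \<Longrightarrow> cnj (xi n) = xi n ^ (n - 1)"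
proof -
  assume n: "n > 0"
  have "cnj (xi n) * xi n = 1"
    unfolding xi_def by (simp add: exp_cnj flip: exp_add)
  moreover have "xi n ^ (n-1) * xi n = 1" using xi_pow_n[OF n] n
    by (metis power_minus_mult)
  ultimately show ?thesis
    by (metis mult.commute mult.right_neutral mult.assoc)
qed

lemma M_cnj: "n > 0 \<Longrightarrow> x \<in> Mn n \<Longrightarrow> cnj x \<in> Mn n"
proof -
  assume n: "n > 0" and "x \<in> Mn n"
  then obtain p where x: "x = poly (mp p) (xi n)" unfolding Mn_def by auto
  have "cnj x = poly (map_poly cnj (mp p)) (cnj (xi n))" unfolding x by (rule poly_cnj)
  also have "map_poly cnj (mp p) = mp p"
    by (simp add: poly_eq_iff coeff_map_poly)
  finally have "cnj x = poly (mp p) (xi n ^ (n - 1))" using cnj_xi[OF n] by simp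
  thus ?thesis using M_poly M_pow M_xi by metis
qed

definition cN :: "nat \<Rightarrow> complex" where "cN n = exp (2 * of_real pi * \<i> / of_nat (bigN n))"

lemma M_cN: "n > 0 \<Longrightarrow> cN n \<in> Mn n"
proof (cases "even n")
  case True
  hence "cN n = xi n" by (simp add: cN_def bigN_def xi_def)
  thus ?thesis by (simp add: M_xi)
next
  case False
  assume n: "n > 0"
  have bN: "bigN n = 2 * n" using False by (simp add: bigN_def)
  have "cN n ^ 2 = exp (of_nat 2 * (2 * of_real pi * \<i> / of_nat (2 * n)))"
    unfolding cN_def bN by (rule exp_of_nat_mult[symmetric])
  also have "of_nat 2 * (2 * of_real pi * \<i> / of_nat (2 * n)) = (2 * of_real pi * \<i> / of_nat n :: complex)"
    using n by (simp add: field_simps)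
  finally have sq: "cN n ^ 2 = xi n" unfolding xi_def .
  have "cN n ^ n = exp (of_nat n * (2 * of_real pi * \<i> / of_nat (2 * n)))"
    unfolding cN_def bN by (rule exp_of_nat_mult[symmetric])
  also have "of_nat n * (2 * of_real pi * \<i> / of_nat (2 * n)) = (of_real pi * \<i> :: complex)"
    using n by (simp add: field_simps)
  finally have pn: "cN n ^ n = -1" by simp
  define m where "m = (n + 1) div 2"
  have m: "n + 1 = 2 * m" using False unfolding m_def by presburger
  have "cN n ^ (n+1) = xi n ^ m" by (simp only: m power_mult sq)
  moreover have "cN n ^ (n+1) = - cN n" using pn by (simp add: power_add)
  ultimately have "cN n = - (xi n ^ m)" by (metis minus_minus)
  thus ?thesis by (simp add: M_uminus M_pow M_xi)
qed

lemma cN_unit: "cN n * cnj (cN n) = 1"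
  unfolding cN_def by (simp add: exp_cnj flip: exp_add)


lemma phi1_pow: "(phi1 n ^^ k) z = cN n ^ k * z"
  by (induct k arbitrary: z) (auto simp: phi1_def cN_def)

lemma DN_form: "h \<in> DN n \<Longrightarrow> \<exists>k. h = (\<lambda>z. cN n ^ k * z) \<or> h = (\<lambda>z. cN n ^ k * cnj z)"
proof -
  assume "h \<in> DN n"
  then obtain k e where h: "h = (phi1 n ^^ k) \<circ> (phi2 ^^ e)" and e: "e < 2" unfolding DN_def by auto
  from e have "e = 0 \<or> e = 1" by auto
  thus ?thesis using h by (auto simp: phi1_pow phi2_def fun_eq_iff)
qed

lemma unit_ideal:
  assumes a: "a \<in> Mn n" and I: "I = {a * x | x. x \<in> Mn n}"
    and u: "u \<in> Mn n" and v: "v \<in> Mn n" and uv: "u * v = 1"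
  shows "(\<lambda>z. u * z) ` I = I"
proof
  show "(\<lambda>z. u * z) ` I \<subseteq> I" using I u by (auto simp: ac_simps intro!: M_mult)
  show "I \<subseteq> (\<lambda>z. u * z) ` I"
  proof
    fix w assume "w \<in> I"
    then obtain x where x: "x \<in> Mn n" "w = a * x" using I by auto
    have "a * (v * x) \<in> I" using I v x by (auto intro!: M_mult)
    moreover have "w = u * (a * (v * x))" using x uv
      by (metis mult.left_commute mult.assoc mult_1)
    ultimately show "w \<in> (\<lambda>z. u * z) ` I" by blast
  qed
qed

lemma cosets_closed:
  assumes I: "I = {a * x | x. x \<in> Mn n}"
    and x: "x \<in> I"
  shows "(\<lambda>z. x + z) ` I = I"
proof -
  obtain y where y: "y \<in> Mn n" "x = a * y" using I x by auto
  show ?thesis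
  proof
    show "(\<lambda>z. x + z) ` I \<subseteq> I"
    proof
      fix w assume "w \<in> (\<lambda>z. x + z) ` I"
      then obtain z where z: "z \<in> Mn n" "w = x + a * z" using I by auto
      have "w = a * (y + z)" using y z by (simp add: distrib_left)
      thus "w \<in> I" using I y z M_add by blast
    qed
    show "I \<subseteq> (\<lambda>z. x + z) ` I"
    proof
      fix w assume "w \<in> I"
      then obtain z where z: "z \<in> Mn n" "w = a * z" using I by auto
      have "a * (z + - y) \<in> I" using I y z M_add M_uminus by blast
      moreover have "w = x + a * (z + - y)" using y z by (simp add: algebra_simps)
      ultimately show "w \<in> (\<lambda>z. x + z) ` I" by blast
    qed
  qed
qed

theorem theorem3p1p2:
  fixes n :: nat and I :: "complex set"
  assumes "n \<in> pid_cyclotomic_indices"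
    and "principal_ideal n I"
    and "finite_index n I"
  shows "color_symmetry_group n I = semidirect_TD n \<longleftrightarrow> phi2 ` I = I"
proof -
  have n: "n > 0" using assms(1) unfolding pid_cyclotomic_indices_def by auto
  obtain a where a: "a \<in> Mn n" and I: "I = {a * x | x. x \<in> Mn n}"
    using assms(2) unfolding principal_ideal_def by auto
  have I0: "0 \<in> I" using I M_0 by force
  show ?thesis
  proof
    assume H: "color_symmetry_group n I = semidirect_TD n"
    have "cnj \<in> DN n" unfolding DN_def phi2_def
      by (rule CollectI, rule exI[of _ 0], rule exI[of _ 1]) (simp add: bigN_def n)
    hence "(\<lambda>x. x + 0) \<circ> cnj \<in> semidirect_TD n"
      unfolding semidirect_TD_def TG_def using M_0 by blast
    hence "cnj \<in> color_symmetry_group n I" using H by (simp add: comp_def)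
    moreover have "(\<lambda>z. 0 + z) ` I \<in> cosets_in n I" unfolding cosets_in_def using M_0 by blast
    ultimately have "cnj ` I \<in> cosets_in n I" unfolding color_symmetry_group_def by auto
    then obtain x where x: "x \<in> Mn n" "cnj ` I = (\<lambda>z. x + z) ` I" unfolding cosets_in_def by auto
    have "0 \<in> cnj ` I" using I0 by force
    then obtain z where z: "z \<in> I" "0 = x + z" using x by auto
    have "- z \<in> I" using z I M_uminus by (auto, metis minus_mult_right M_uminus)
    hence "x \<in> I" using z by (metis add.commute add_eq_0_iff)
    thus "phi2 ` I = I" using x cosets_closed[OF I] by (simp add: phi2_def)
  next
    assume c: "phi2 ` I = I"
    show "color_symmetry_group n I = semidirect_TD n"
    proof
      show "color_symmetry_group n I \<subseteq> semidirect_TD n"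
        unfolding color_symmetry_group_def Gsym_def by auto
      show "semidirect_TD n \<subseteq> color_symmetry_group n I"
      proof
        fix g assume "g \<in> semidirect_TD n"
        then obtain y h where g: "g = (\<lambda>x. x + y) \<circ> h" and y: "y \<in> Mn n" and h: "h \<in> DN n"
          unfolding semidirect_TD_def TG_def by auto
        obtain k where hk: "h = (\<lambda>z. cN n ^ k * z) \<or> h = (\<lambda>z. cN n ^ k * cnj z)"
          using DN_form[OF h] by auto
        have u: "cN n ^ k \<in> Mn n" using M_cN[OF n] M_pow by blast
        have v: "cnj (cN n) ^ k \<in> Mn n" using M_cN[OF n] M_pow M_cnj[OF n] by blast
        have uv: "cN n ^ k * cnj (cN n) ^ k = 1" using cN_unit by (metis power_mult_distrib power_one)
        have uI: "(\<lambda>z. cN n ^ k * z) ` I = I" using unit_ideal[OF a I u v uv] .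
        have hP: "h ` I = I \<and> (\<forall>x z. h (x + z) = h x + h z) \<and> (\<forall>x\<in>Mn n. h x \<in> Mn n)"
          using hk
        proof (elim disjE)
          assume hh: "h = (\<lambda>z. cN n ^ k * z)"
          show ?thesis using uI hh u M_mult by (simp add: distrib_left)
        next
          assume hh: "h = (\<lambda>z. cN n ^ k * cnj z)"
          have "h ` I = (\<lambda>z. cN n ^ k * z) ` (cnj ` I)" using hh by (simp add: image_image)
          hence "h ` I = I" using uI c by (simp add: phi2_def)
          thus ?thesis using hh u M_mult M_cnj[OF n] by (simp add: distrib_left)
        qed
        hence hI: "h ` I = I" and hadd: "\<And>x z. h (x + z) = h x + h z"
          and hM: "\<And>x. x \<in> Mn n \<Longrightarrow> h x \<in> Mn n" by auto
        have "g ` C \<in> cosets_in n I" if C: "C \<in> cosets_in n I" for C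
        proof -
          obtain x where x: "x \<in> Mn n" "C = (\<lambda>z. x + z) ` I" using C unfolding cosets_in_def by auto
          have "g ` C = (\<lambda>z. (h x + y) + z) ` (h ` I)"
            using x g hadd by (auto simp: image_image algebra_simps)
          also have "\<dots> = (\<lambda>z. (h x + y) + z) ` I" using hI by simp
          finally show ?thesis unfolding cosets_in_def using M_add[OF hM[OF x(1)] y] by blast
        qed
        moreover have "g \<in> Gsym n" using \<open>g \<in> semidirect_TD n\<close> by (simp add: Gsym_def)
        ultimately show "g \<in> color_symmetry_group n I" unfolding color_symmetry_group_def by blast
      qed
    qed
  qed
qed

end
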